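(* Let $\lambda_2<0$, $C_1,C_2\in\mathbb{R}$, and $q(t)=C_1t+\frac{C_2}{\lambda_2}\big(e^{\lambda_2 t}-1\big)+1$. Then $q$ vanishes at some $t>0$ if and only if one of the following holds: (1) $C_1<0$; (2) $C_1=0$, $C_2<\lambda_2$; (3) $C_1>0$, $C_2<0$, $C_1+C_2<0$ and $\lambda_2+C_1\ln\!\left(-\tfrac{C_1}{C_2}\right)\ge C_1+C_2$.
   Context: This $q$ is the decisive function of the extended system $\dot{\mathbf v}=-v_1\mathbf v+Q\mathbf v$ when $Q$ is diagonalizable with eigenvalues $\lambda_1=0>\lambda_2$ (with $C_1=\frac{a_{22}}{\det A}(a_{11}v_1(0)+a_{12}v_2(0))$, $C_2=-\frac{a_{12}}{\det A}(a_{21}v_1(0)+a_{22}v_2(0))$, $AQA^{-1}=\mathrm{diag}(\lambda_1,\lambda_2)$); finite-time blow-up of the extended system is equivalent to $q$ vanishing at some $t>0$. *)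

theory Defs
  imports Complex_Main
begin

definition decisive_q :: "real \<Rightarrow> real \<Rightarrow> real \<Rightarrow> real \<Rightarrow> real" where
  "decisive_q lam2 C1 C2 t = C1 * t + (C2 / lam2) * (exp (lam2 * t) - 1) + 1"

end

theory Submission
  imports Defs
begin

lemma q_cont: "isCont (decisive_q l a b) x"
  unfolding decisive_q_def[abs_def] by (intro continuous_intros)

lemma q0: "decisive_q l a b 0 = 1"
  by (simp add: decisive_q_def)

lemma ivt_q:
  assumes "T > 0" "decisive_q l a b T \<le> 0"
  shows "\<exists>t>0. decisive_q l a b t = 0"
proof -
  obtain x where "x \<ge> 0" "x \<le> T" "decisive_q l a b x = 0"
    using IVT2[of "decisive_q l a b" T 0 0] assms q0 q_cont
    by (metis less_eq_real_def zero_less_one)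
  moreover have "x \<noteq> 0" using calculation q0 by auto
  ultimately show ?thesis by (intro exI[of _ x]) auto
qed

theorem mainTheorem5:
  fixes lam2 C1 C2 :: real
  assumes "lam2 < 0"
  shows "(\<exists>t>0. decisive_q lam2 C1 C2 t = 0) \<longleftrightarrow>
           (C1 < 0
            \<or> (C1 = 0 \<and> C2 < lam2)
            \<or> (C1 > 0 \<and> C2 < 0 \<and> C1 + C2 < 0 \<and>
                lam2 + C1 * ln (- C1 / C2) \<ge> C1 + C2))"
proof
  assume "\<exists>t>0. decisive_q lam2 C1 C2 t = 0"
  then obtain t where t: "t > 0" "decisive_q lam2 C1 C2 t = 0" by auto
  have e1: "exp (lam2 * t) < 1" using assms t by (simp add: mult_neg_pos)
  have e0: "exp (lam2 * t) > 0" by simp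
  show "C1 < 0 \<or> (C1 = 0 \<and> C2 < lam2) \<or> (C1 > 0 \<and> C2 < 0 \<and> C1 + C2 < 0 \<and>
                lam2 + C1 * ln (- C1 / C2) \<ge> C1 + C2)"
  proof (rule ccontr)
    assume H: "\<not> ?thesis"
    have "decisive_q lam2 C1 C2 t > 0"
    proof (cases "C1 = 0")
      case True
      with H have c2: "C2 \<ge> lam2" by auto
      show ?thesis
      proof (cases "C2 \<ge> 0")
        case True
        have "C2 / lam2 \<le> 0" using True assms by (simp add: divide_nonneg_neg)
        hence "(C2 / lam2) * (exp (lam2 * t) - 1) \<ge> 0" using e1
          by (intro mult_nonpos_nonpos) auto
        thus ?thesis using \<open>C1 = 0\<close> by (simp add: decisive_q_def)
      next
        case False
        have k0: "C2 / lam2 > 0" using False assms by (simp add: divide_neg_neg)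
        have k1: "C2 / lam2 \<le> 1" using c2 assms by (simp add: divide_le_eq)
        have "(C2 / lam2) * (1 - exp (lam2 * t)) < 1"
        proof -
          have "(C2 / lam2) * (1 - exp (lam2 * t)) \<le> 1 * (1 - exp (lam2 * t))"
            using k1 e1 by (intro mult_right_mono) auto
          thus ?thesis using e0 by (simp only: mult_1)
        qed
        thus ?thesis using \<open>C1 = 0\<close> by (simp add: decisive_q_def algebra_simps)
      qed
    next
      case False
      with H have c1: "C1 > 0" by auto
      show ?thesis
      proof (cases "C2 \<ge> 0")
        case True
        have "C2 / lam2 \<le> 0" using True assms by (simp add: divide_nonneg_neg)
        hence "(C2 / lam2) * (exp (lam2 * t) - 1) \<ge> 0" using e1
          by (intro mult_nonpos_nonpos) auto
        moreover have "C1 * t > 0" using c1 t by simp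
        ultimately show ?thesis by (simp add: decisive_q_def)
      next
        case False
        hence c2: "C2 < 0" by simp
        have k0: "C2 / lam2 > 0" using c2 assms by (simp add: divide_neg_neg)
        show ?thesis
        proof (cases "C1 + C2 \<ge> 0")
          case True
          have "exp (lam2 * t) \<ge> 1 + lam2 * t" using exp_ge_add_one_self by simp
          hence "(C2 / lam2) * (exp (lam2 * t) - 1) \<ge> (C2 / lam2) * (lam2 * t)"
            using k0 by (intro mult_left_mono) linarith+
          moreover have "(C2 / lam2) * (lam2 * t) = C2 * t" using assms by simp
          moreover have "(C1 + C2) * t \<ge> 0" using True t by simp
          ultimately show ?thesis by (simp add: decisive_q_def algebra_simps)
        next
          case False
          hence s: "C1 + C2 < 0" by simp
          with H c1 c2 have L: "lam2 + C1 * ln (- C1 / C2) < C1 + C2" by auto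
          define r where "r = - C1 / C2"
          have r0: "r > 0" using c1 c2 by (simp add: r_def divide_pos_neg)
          define ts where "ts = ln r / lam2"
          have ets: "exp (lam2 * ts) = r" using assms r0 by (simp add: ts_def)
          have C2r: "C2 * r = - C1" using c2 by (simp add: r_def)
          have qts: "decisive_q lam2 C1 C2 ts = (C1 * ln r - C1 - C2 + lam2) / lam2"
            using assms unfolding decisive_q_def ets ts_def
            by (simp add: field_simps C2r r0)
          have qtsp: "decisive_q lam2 C1 C2 ts > 0"
            unfolding qts using L assms r_def by (simp add: divide_neg_neg)
          have "exp (lam2 * t) = r * exp (lam2 * (t - ts))"
            by (simp add: ets[symmetric] exp_add[symmetric] algebra_simps)
          also have "\<dots> \<ge> r * (1 + lam2 * (t - ts))"
            using r0 exp_ge_add_one_self[of "lam2 * (t - ts)"]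
            by (intro mult_left_mono) auto
          finally have F1: "(C2 / lam2) * exp (lam2 * t) \<ge> (C2 / lam2) * (r * (1 + lam2 * (t - ts)))"
            using k0 by (intro mult_left_mono) auto
          moreover have F2: "(C2 / lam2) * (r * (1 + lam2 * (t - ts)))
                 = (C2 / lam2) * r - C1 * (t - ts)"
          proof -
            have "(C2 / lam2) * (r * (1 + lam2 * (t - ts))) = (C2 / lam2) * r + (C2 * r) * (t - ts)"
              using assms by (simp add: field_simps)
            thus ?thesis using C2r by simp
          qed
          ultimately have "decisive_q lam2 C1 C2 t \<ge> decisive_q lam2 C1 C2 ts"
          proof -
            have "decisive_q lam2 C1 C2 t = C1 * t + (C2 / lam2) * exp (lam2 * t) - C2 / lam2 + 1"
              unfolding decisive_q_def by (simp add: right_diff_distrib)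
            moreover have "decisive_q lam2 C1 C2 ts = C1 * ts + (C2 / lam2) * r - C2 / lam2 + 1"
              unfolding decisive_q_def ets by (simp add: right_diff_distrib)
            moreover have "C1 * (t - ts) = C1 * t - C1 * ts" by (simp add: right_diff_distrib)
            ultimately show ?thesis using F1 F2 by linarith
          qed
          thus ?thesis using qtsp by linarith
        qed
      qed
    qed
    thus False using t by simp
  qed
next
  assume A: "C1 < 0 \<or> (C1 = 0 \<and> C2 < lam2) \<or> (C1 > 0 \<and> C2 < 0 \<and> C1 + C2 < 0 \<and>
                lam2 + C1 * ln (- C1 / C2) \<ge> C1 + C2)"
  show "\<exists>t>0. decisive_q lam2 C1 C2 t = 0"
  proof (cases "C1 < 0")
    case True
    define K where "K = \<bar>C2 / lam2\<bar>"
    define T where "T = (K + 2) / (- C1)"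
    have K0: "K \<ge> 0" by (simp add: K_def)
    have T0: "T > 0" using True K0 by (simp add: T_def divide_pos_neg)
    have CT: "C1 * T = - (K + 2)" using True by (simp add: T_def)
    have e1: "exp (lam2 * T) < 1" using assms T0 by (simp add: mult_neg_pos)
    have "\<bar>exp (lam2 * T) - 1\<bar> \<le> 1" using e1 by simp
    hence "\<bar>(C2 / lam2) * (exp (lam2 * T) - 1)\<bar> \<le> K * 1"
      unfolding K_def abs_mult by (intro mult_left_mono) auto
    hence "decisive_q lam2 C1 C2 T \<le> 0" unfolding decisive_q_def CT by linarith
    thus ?thesis using ivt_q T0 by blast
  next
    case F: False
    show ?thesis
    proof (cases "C1 = 0")
      case True
      with A have c2: "C2 < lam2" by auto
      hence c2n: "C2 < 0" using assms by simp
      define r where "r = 1 - lam2 / C2"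
      have a0: "lam2 / C2 > 0" using assms c2n by (simp add: divide_neg_neg)
      have a1: "lam2 / C2 < 1" using c2 c2n by (simp add: divide_less_eq)
      have r0: "r > 0" "r < 1" using a0 a1 by (auto simp: r_def)
      define T where "T = ln r / lam2"
      have T0: "T > 0" using r0 assms by (simp add: T_def divide_neg_neg)
      have eT: "exp (lam2 * T) = r" using assms r0 by (simp add: T_def)
      have "decisive_q lam2 C1 C2 T = 0"
        unfolding decisive_q_def eT r_def using True assms c2n by (simp add: field_simps)
      thus ?thesis using T0 by blast
    next
      case False
      with A F have c1: "C1 > 0" and c2: "C2 < 0" and s: "C1 + C2 < 0"
        and L: "lam2 + C1 * ln (- C1 / C2) \<ge> C1 + C2" by auto
      define r where "r = - C1 / C2"
      have r0: "r > 0" using c1 c2 by (simp add: r_def divide_pos_neg)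
      have r1: "r < 1" using c2 s by (simp add: r_def less_divide_eq)
      define ts where "ts = ln r / lam2"
      have T0: "ts > 0" using r0 r1 assms by (simp add: ts_def divide_neg_neg)
      have ets: "exp (lam2 * ts) = r" using assms r0 by (simp add: ts_def)
      have C2r: "C2 * r = - C1" using c2 by (simp add: r_def)
      have qts: "decisive_q lam2 C1 C2 ts = (C1 * ln r - C1 - C2 + lam2) / lam2"
        using assms unfolding decisive_q_def ets ts_def
        by (simp add: field_simps C2r r0)
      have "decisive_q lam2 C1 C2 ts \<le> 0"
        unfolding qts using L assms r_def by (simp add: divide_nonneg_neg)
      thus ?thesis using ivt_q T0 by blast
    qed
  qed
qed

end
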